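(* Let $\chi,b,\nu,\mu>0$ with $b\ge\frac32\chi\mu$, and $c\in\mathbb{R}$. Let $r$ be globally Hölder continuous and bounded with finite limits $r(\pm\infty)$, $r(-\infty)<0<r(\infty)$ and $r(-\infty)\le r(x)\le r(\infty)$ for all $x$; put $r^*=\sup r=r(\infty)$. Fix $r_1$ with $r(-\infty)<r_1<0$, a point $x_1$ with $r(x)\le r_1$ for all $x\le x_1$, and let $\theta_1$ be the positive root of $\theta^2+c\theta+r_1=0$. Then for every $u\in\mathcal{E}_1^+$: $$\mathcal{A}_u\Big(\frac{r^*}{b-\chi\mu}\Big)(x)\le0\ \text{ for all }x\in\mathbb{R},\qquad \mathcal{A}_u\Big(\frac{r^*}{b-\chi\mu}e^{\theta_1(\cdot-x_1)}\Big)(x)\le 0\ \text{ for all }x\in(-\infty,x_1).$$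
   Context: $C^b_{\rm unif}(\mathbb{R})$: bounded uniformly continuous functions on $\mathbb{R}$. For $u\in C^b_{\rm unif}(\mathbb{R})$, $\Psi(x;u)=\frac{\mu}{2\sqrt\nu}\int_{\mathbb{R}}e^{-\sqrt\nu|x-y|}u(y)\,dy$ (the bounded solution of $\Psi''-\nu\Psi+\mu u=0$). $U_1^+(x)=\min\{\frac{r^*}{b-\chi\mu},\frac{r^*}{b-\chi\mu}e^{\theta_1(x-x_1)}\}$ and $\mathcal{E}_1^+=\{u\in C^b_{\rm unif}(\mathbb{R}):0\le u(x)\le U_1^+(x)\ \forall x\}$. For $u\in\mathcal{E}_1^+$ and $U\in C^2$, $$\mathcal{A}_u(U)(x)=U_{xx}+(c-\chi\Psi_x(x;u))U_x+(r(x)-\chi\nu\Psi(x;u)-(b-\chi\mu)U)U.$$ *)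

theory Defs
  imports "HOL-Analysis.Analysis"
begin

definition Cb_unif :: "(real \<Rightarrow> real) set" where
  "Cb_unif = {u. bounded (range u) \<and> uniformly_continuous_on UNIV u}"

definition globally_hoelder :: "(real \<Rightarrow> real) \<Rightarrow> bool" where
  "globally_hoelder f \<longleftrightarrow>
     (\<exists>C \<alpha>. 0 < \<alpha> \<and> \<alpha> \<le> 1 \<and> (\<forall>x y. \<bar>f x - f y\<bar> \<le> C * \<bar>x - y\<bar> powr \<alpha>))"

definition Psi :: "real \<Rightarrow> real \<Rightarrow> (real \<Rightarrow> real) \<Rightarrow> real \<Rightarrow> real" where
  "Psi \<nu> \<mu> u x = \<mu> / (2 * sqrt \<nu>) *
     (\<integral>y. exp (- sqrt \<nu> * \<bar>x - y\<bar>) * u y \<partial>lborel)"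

definition U1plus :: "real \<Rightarrow> real \<Rightarrow> real \<Rightarrow> real \<Rightarrow> real \<Rightarrow> real \<Rightarrow> real \<Rightarrow> real" where
  "U1plus rstar b chi \<mu> \<theta>1 x1 x =
     min (rstar / (b - chi * \<mu>)) (rstar / (b - chi * \<mu>) * exp (\<theta>1 * (x - x1)))"

definition E1plus :: "real \<Rightarrow> real \<Rightarrow> real \<Rightarrow> real \<Rightarrow> real \<Rightarrow> real \<Rightarrow> (real \<Rightarrow> real) set" where
  "E1plus rstar b chi \<mu> \<theta>1 x1 =
     {u \<in> Cb_unif. \<forall>x. 0 \<le> u x \<and> u x \<le> U1plus rstar b chi \<mu> \<theta>1 x1 x}"

definition A_op :: "real \<Rightarrow> real \<Rightarrow> real \<Rightarrow> real \<Rightarrow> real \<Rightarrow> (real \<Rightarrow> real)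
      \<Rightarrow> (real \<Rightarrow> real) \<Rightarrow> (real \<Rightarrow> real) \<Rightarrow> real \<Rightarrow> real" where
  "A_op chi \<nu> \<mu> b c r u U x =
     deriv (deriv U) x
     + (c - chi * deriv (Psi \<nu> \<mu> u) x) * deriv U x
     + (r x - chi * \<nu> * Psi \<nu> \<mu> u x - (b - chi * \<mu>) * U x) * U x"

end

theory Submission
  imports Defs
begin

lemma exp_left:
  fixes c x :: real assumes c: "c > 0"
  shows "set_integrable lborel {..<x} (\<lambda>y. exp (c*y))"
    "(LBINT y=-\<infinity>..ereal x. exp (c*y)) = exp (c*x)/c"
proof -
  have lim0: "((\<lambda>y. exp (c*y)/c) \<longlongrightarrow> 0) at_bot"
  proof -
    have "((\<lambda>y. exp (c*y)) \<longlongrightarrow> 0) at_bot"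
      using c by (auto intro!: exp_at_bot[THEN filterlim_compose] filterlim_tendsto_pos_mult_at_bot filterlim_ident)
    from tendsto_divide[OF this tendsto_const[of c]] c show ?thesis by simp
  qed
  note r = interval_integral_FTC_nonneg[of "-\<infinity>" "ereal x" "\<lambda>y. exp (c*y)/c" "\<lambda>y. exp (c*y)" 0 "exp (c*x)/c"]
  have h: "set_integrable lborel (einterval (-\<infinity>) (ereal x)) (\<lambda>y. exp (c*y)) \<and> (LBINT y=-\<infinity>..ereal x. exp (c*y)) = exp (c*x)/c - 0"
    apply (rule conjI; rule r)
    using c lim0 by (auto intro!: derivative_eq_intros tendsto_intros simp: ereal_tendsto_simps)
  then show "set_integrable lborel {..<x} (\<lambda>y. exp (c*y))"
    "(LBINT y=-\<infinity>..ereal x. exp (c*y)) = exp (c*x)/c" by auto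
qed

lemma exp_right:
  fixes c x :: real assumes c: "c > 0"
  shows "set_integrable lborel {x<..} (\<lambda>y. exp (- c*y))"
    "(LBINT y=ereal x..\<infinity>. exp (- c*y)) = exp (- c*x)/c"
proof -
  have lim0: "((\<lambda>y. - exp (- c*y)/c) \<longlongrightarrow> 0) at_top"
  proof -
    have "((\<lambda>y. exp (- c*y)) \<longlongrightarrow> 0) at_top"
      using c by (auto intro!: exp_at_bot[THEN filterlim_compose] filterlim_tendsto_pos_mult_at_top filterlim_ident
             simp: filterlim_uminus_at_bot mult.commute[of _ c])
    from tendsto_minus[OF tendsto_divide[OF this tendsto_const[of c]]] c show ?thesis by simp
  qed
  note r = interval_integral_FTC_nonneg[of "ereal x" "\<infinity>" "\<lambda>y. - exp (- c*y)/c" "\<lambda>y. exp (- c*y)" "- exp (- c*x)/c" 0]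
  have h: "set_integrable lborel (einterval (ereal x) \<infinity>) (\<lambda>y. exp (- c*y)) \<and> (LBINT y=ereal x..\<infinity>. exp (- c*y)) = 0 - (- exp (- c*x)/c)"
    apply (rule conjI; rule r)
    using c lim0 by (auto intro!: derivative_eq_intros tendsto_intros simp: ereal_tendsto_simps)
  then show "set_integrable lborel {x<..} (\<lambda>y. exp (- c*y))"
    "(LBINT y=ereal x..\<infinity>. exp (- c*y)) = exp (- c*x)/c" by auto
qed

lemma ftc_univ:
  fixes g :: "real \<Rightarrow> real" and c x :: real
  assumes cg: "continuous_on UNIV g"
  shows "((\<lambda>t. LBINT y=ereal c..ereal t. g y) has_real_derivative g x) (at x)"
proof -
  define lo where "lo = min c x - 1"
  define hi where "hi = max c x + 1"
  have "((\<lambda>t. LBINT y=c..t. g y) has_vector_derivative g x) (at x within {lo..hi})"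
    by (rule interval_integral_FTC2) (auto simp: lo_def hi_def intro: continuous_on_subset[OF cg])
  then have "((\<lambda>t. LBINT y=c..t. g y) has_vector_derivative g x) (at x within {lo<..<hi})"
    by (rule has_vector_derivative_within_subset) auto
  moreover have "at x within {lo<..<hi} = at x"
    by (rule at_within_open) (auto simp: lo_def hi_def)
  ultimately have "((\<lambda>t. LBINT y=c..t. g y) has_vector_derivative g x) (at x)" by simp

  then show ?thesis by (simp add: has_real_derivative_iff_has_vector_derivative)
qed

lemma psi_deriv:
  fixes a K :: real and u :: "real \<Rightarrow> real"
  assumes a: "a > 0" and cu: "continuous_on UNIV u" and ub: "\<And>y. 0 \<le> u y \<and> u y \<le> K"
  shows "((\<lambda>x. \<integral>y. exp (- a * \<bar>x - y\<bar>) * u y \<partial>lborel) has_real_derivative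
      a * (exp (a*x) * (LBINT y=ereal x..\<infinity>. exp (- a*y) * u y)
         - exp (- a*x) * (LBINT y=-\<infinity>..ereal x. exp (a*y) * u y))) (at x)"
    "(LBINT y=ereal x..\<infinity>. exp (- a*y) * u y) \<ge> 0"
    "(LBINT y=-\<infinity>..ereal x. exp (a*y) * u y) = (LBINT y:{..<x}. exp (a*y) * u y)"
    "set_integrable lborel {..<x} (\<lambda>y. exp (a*y) * u y)"
proof -
  define g1 where "g1 = (\<lambda>y. exp (a*y) * u y)"
  define g2 where "g2 = (\<lambda>y. exp (- a*y) * u y)"
  define L where "L = (\<lambda>x. LBINT y=-\<infinity>..ereal x. g1 y)"
  define R where "R = (\<lambda>x. LBINT y=ereal x..\<infinity>. g2 y)"
  have um[measurable]: "u \<in> borel_measurable lborel"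
    using borel_measurable_continuous_onI[OF cu] by simp
  have cg1: "continuous_on UNIV g1" unfolding g1_def by (intro continuous_intros cu)
  have cg2: "continuous_on UNIV g2" unfolding g2_def by (intro continuous_intros cu)
  have intL: "set_integrable lborel {..<c} g1" for c
  proof (rule set_integrable_bound[where f="\<lambda>y. K * exp (a*y)"])
    show "set_integrable lborel {..<c} (\<lambda>y. K * exp (a * y))"
      using exp_left(1)[OF a] by simp
    show "set_borel_measurable lborel {..<c} g1" unfolding set_borel_measurable_def g1_def by measurable
    show "AE x in lborel. x \<in> {..<c} \<longrightarrow> norm (g1 x) \<le> norm (K * exp (a * x))"
      using ub by (auto simp: g1_def abs_mult intro!: mult_right_mono AE_I2 intro: order_trans[OF _ abs_ge_self])
  qed
  have intR: "set_integrable lborel {c<..} g2" for c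
  proof (rule set_integrable_bound[where f="\<lambda>y. K * exp (- a*y)"])
    show "set_integrable lborel {c<..} (\<lambda>y. K * exp (- a * y))"
      using exp_right(1)[OF a] by simp
    show "set_borel_measurable lborel {c<..} g2" unfolding set_borel_measurable_def g2_def by measurable
    show "AE x in lborel. x \<in> {c<..} \<longrightarrow> norm (g2 x) \<le> norm (K * exp (- a * x))"
      using ub by (auto simp: g2_def abs_mult intro!: mult_right_mono AE_I2 intro: order_trans[OF _ abs_ge_self])
  qed
  have Leq: "L x = (LBINT y:{..<x}. g1 y)" for x
    by (simp add: L_def interval_lebesgue_integral_le_eq)
  have Req: "R x = (LBINT y:{x<..}. g2 y)" for x
    by (simp add: R_def interval_lebesgue_integral_le_eq)
  have decomp: "(\<integral>y. exp (- a * \<bar>x - y\<bar>) * u y \<partial>lborel) = exp (- a*x) * L x + exp (a*x) * R x" for x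
  proof -
    define f where "f = (\<lambda>y. exp (- a * \<bar>x - y\<bar>) * u y)"
    have fm: "set_borel_measurable lborel A f" if "A \<in> sets lborel" for A
      using that unfolding set_borel_measurable_def f_def by measurable
    have e1: "(LBINT y:{..<x}. f y) = exp (- a*x) * L x"
    proof -
      have "(LBINT y:{..<x}. f y) = (LBINT y:{..<x}. exp (- a*x) * g1 y)"
        by (rule set_lebesgue_integral_cong) (auto simp: f_def g1_def mult_exp_exp algebra_simps)
      then show ?thesis by (simp add: Leq)
    qed
    have e2: "(LBINT y:{x<..}. f y) = exp (a*x) * R x"
    proof -
      have "(LBINT y:{x<..}. f y) = (LBINT y:{x<..}. exp (a*x) * g2 y)"
        by (rule set_lebesgue_integral_cong) (auto simp: f_def g2_def mult_exp_exp algebra_simps)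
      then show ?thesis by (simp add: Req)
    qed
    have i1: "set_integrable lborel {..<x} f"
    proof -
      have "set_integrable lborel {..<x} f = set_integrable lborel {..<x} (\<lambda>t. exp (- a*x) * g1 t)"
        by (rule set_integrable_cong_AE) (auto simp: f_def g1_def mult_exp_exp algebra_simps intro!: AE_I2)
      then show ?thesis using set_integrable_mult_right[OF intL[of x], of "exp (- a*x)"] by simp
    qed
    have i2: "set_integrable lborel {x<..} f"
    proof -
      have "set_integrable lborel {x<..} f = set_integrable lborel {x<..} (\<lambda>t. exp (a*x) * g2 t)"
        by (rule set_integrable_cong_AE) (auto simp: f_def g2_def mult_exp_exp algebra_simps intro!: AE_I2)
      then show ?thesis using set_integrable_mult_right[OF intR[of x], of "exp (a*x)"] by simp
    qed
    have "(\<integral>y. f y \<partial>lborel) = (LBINT y:UNIV. f y)"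
      by (simp add: set_lebesgue_integral_def)
    also have "\<dots> = (LBINT y:{..<x} \<union> {x<..}. f y)"
      by (rule set_integral_cong_set) (auto intro!: fm intro: eventually_mono[OF AE_lborel_singleton[of x]])
    also have "\<dots> = (LBINT y:{..<x}. f y) + (LBINT y:{x<..}. f y)"
      by (rule set_integral_Un) (auto intro: i1 i2)
    finally show ?thesis using e1 e2 f_def by simp
  qed
  have Lsplit: "L t = L 0 + (LBINT y=ereal 0..ereal t. g1 y)" for t
  proof -
    have "interval_lebesgue_integrable lborel (min (-\<infinity>) (min (ereal 0) (ereal t))) (max (-\<infinity>) (max (ereal 0) (ereal t))) g1"
      using intL by (simp add: interval_lebesgue_integrable_def max_def)
    from interval_integral_sum[OF this] show ?thesis by (simp add: L_def zero_ereal_def)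
  qed
  have Rsplit: "R t = R 0 - (LBINT y=ereal 0..ereal t. g2 y)" for t
  proof -
    have "interval_lebesgue_integrable lborel (min (ereal t) (min (ereal 0) \<infinity>)) (max (ereal t) (max (ereal 0) \<infinity>)) g2"
      using intR by (simp add: interval_lebesgue_integrable_def min_def)
    from interval_integral_sum[OF this] have "(LBINT y=ereal t..ereal 0. g2 y) + R 0 = R t"
      by (simp add: R_def)
    moreover have "(LBINT y=ereal t..ereal 0. g2 y) = - (LBINT y=ereal 0..ereal t. g2 y)"
      by (rule interval_integral_endpoints_reverse)
    ultimately show ?thesis by simp
  qed
  have I: "(\<lambda>x. \<integral>y. exp (- a * \<bar>x - y\<bar>) * u y \<partial>lborel) =
     (\<lambda>x. exp (- a*x) * (L 0 + (LBINT y=ereal 0..ereal x. g1 y)) + exp (a*x) * (R 0 - (LBINT y=ereal 0..ereal x. g2 y)))"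
  proof (rule ext)
    fix t show "(\<integral>y. exp (- a * \<bar>t - y\<bar>) * u y \<partial>lborel) = exp (- a*t) * (L 0 + (LBINT y=ereal 0..ereal t. g1 y)) + exp (a*t) * (R 0 - (LBINT y=ereal 0..ereal t. g2 y))"
      using decomp[of t] Lsplit[of t] Rsplit[of t] by simp
  qed
  have D: "((\<lambda>x. exp (- a*x) * (L 0 + (LBINT y=ereal 0..ereal x. g1 y)) + exp (a*x) * (R 0 - (LBINT y=ereal 0..ereal x. g2 y)))
     has_real_derivative
     (- a * exp (- a*x) * (L 0 + (LBINT y=ereal 0..ereal x. g1 y)) + exp (- a*x) * g1 x
      + (a * exp (a*x) * (R 0 - (LBINT y=ereal 0..ereal x. g2 y)) - exp (a*x) * g2 x))) (at x)"
  proof -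
    note d1 = ftc_univ[OF cg1, of 0 x] and d2 = ftc_univ[OF cg2, of 0 x]
    show ?thesis
      by (rule derivative_eq_intros d1 d2 refl)+ (simp add: algebra_simps)
  qed
  have "- a * exp (- a*x) * (L 0 + (LBINT y=ereal 0..ereal x. g1 y)) + exp (- a*x) * g1 x
      + (a * exp (a*x) * (R 0 - (LBINT y=ereal 0..ereal x. g2 y)) - exp (a*x) * g2 x)
     = a * (exp (a*x) * R x - exp (- a*x) * L x)"
    by (simp add: Lsplit[of x] Rsplit[of x] g1_def g2_def algebra_simps mult_exp_exp)
  with D I show "((\<lambda>x. \<integral>y. exp (- a * \<bar>x - y\<bar>) * u y \<partial>lborel) has_real_derivative
      a * (exp (a*x) * (LBINT y=ereal x..\<infinity>. exp (- a*y) * u y)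
         - exp (- a*x) * (LBINT y=-\<infinity>..ereal x. exp (a*y) * u y))) (at x)"
    by (simp add: L_def R_def g1_def g2_def)
  show "(LBINT y=ereal x..\<infinity>. exp (- a*y) * u y) \<ge> 0"
    using ub by (simp add: interval_lebesgue_integral_le_eq set_lebesgue_integral_def integral_nonneg_AE)
  show "(LBINT y=-\<infinity>..ereal x. exp (a*y) * u y) = (LBINT y:{..<x}. exp (a*y) * u y)"
    by (simp add: interval_lebesgue_integral_le_eq)
  show "set_integrable lborel {..<x} (\<lambda>y. exp (a*y) * u y)" using intL g1_def by simp
qed

lemma left_bound:
  fixes a K \<theta> x1 x :: real and u :: "real \<Rightarrow> real"
  assumes a: "a > 0" and th: "\<theta> > 0" and int: "set_integrable lborel {..<x} (\<lambda>y. exp (a*y) * u y)"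
    and ub: "\<And>y. u y \<le> K * exp (\<theta> * (y - x1))"
  shows "exp (- a*x) * (LBINT y:{..<x}. exp (a*y) * u y) \<le> K * exp (\<theta> * (x - x1)) / (a + \<theta>)"
proof -
  have ac: "a + \<theta> > 0" using a th by simp
  have e: "exp (a*y) * (K * exp (\<theta> * (y - x1))) = (K * exp (- \<theta> * x1)) * exp ((a+\<theta>)*y)" for y
    by (simp add: mult_exp_exp algebra_simps)
  have i2: "set_integrable lborel {..<x} (\<lambda>y. (K * exp (- \<theta> * x1)) * exp ((a+\<theta>)*y))"
    using exp_left(1)[OF ac] by simp
  have "(LBINT y:{..<x}. exp (a*y) * u y) \<le> (LBINT y:{..<x}. (K * exp (- \<theta> * x1)) * exp ((a+\<theta>)*y))"
  proof (rule set_integral_mono[OF int i2])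
    fix y
    have "exp (a*y) * u y \<le> exp (a*y) * (K * exp (\<theta> * (y - x1)))"
      by (rule mult_left_mono[OF ub]) simp
    then show "exp (a*y) * u y \<le> (K * exp (- \<theta> * x1)) * exp ((a+\<theta>)*y)" by (simp only: e)
  qed
  also have "\<dots> = (K * exp (- \<theta> * x1)) * (exp ((a+\<theta>)*x) / (a+\<theta>))"
    using exp_left(2)[OF ac, of x] by (simp add: interval_lebesgue_integral_le_eq)
  finally have "exp (- a*x) * (LBINT y:{..<x}. exp (a*y) * u y) \<le> exp (- a*x) * ((K * exp (- \<theta> * x1)) * (exp ((a+\<theta>)*x) / (a+\<theta>)))"
    by (rule mult_left_mono) simp
  also have "\<dots> = K * exp (\<theta> * (x - x1)) / (a + \<theta>)"
    by (simp add: mult_exp_exp algebra_simps)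
  finally show ?thesis .
qed

theorem lemma3p1:
  fixes chi b \<nu> \<mu> c rm rp rstar r1 x1 \<theta>1 :: real and r :: "real \<Rightarrow> real"
  assumes "chi > 0" "b > 0" "\<nu> > 0" "\<mu> > 0" "b \<ge> 3/2 * chi * \<mu>"
    and "globally_hoelder r" "bounded (range r)"
    and "(r \<longlongrightarrow> rm) at_bot" "(r \<longlongrightarrow> rp) at_top"
    and "rm < 0" "0 < rp" "\<And>x. rm \<le> r x \<and> r x \<le> rp"
    and "rstar = (SUP x. r x)"
    and "rm < r1" "r1 < 0" "\<And>x. x \<le> x1 \<Longrightarrow> r x \<le> r1"
    and "\<theta>1 > 0" "\<theta>1\<^sup>2 + c * \<theta>1 + r1 = 0"
    and "u \<in> E1plus rstar b chi \<mu> \<theta>1 x1"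
  shows "(\<forall>x. A_op chi \<nu> \<mu> b c r u (\<lambda>_. rstar / (b - chi * \<mu>)) x \<le> 0)
    \<and> (\<forall>x < x1. A_op chi \<nu> \<mu> b c r u
          (\<lambda>y. rstar / (b - chi * \<mu>) * exp (\<theta>1 * (y - x1))) x \<le> 0)"
proof -
  note chi = assms(1) and nu = assms(3) and mu = assms(4) and bge = assms(5)
  note th = assms(17) and thr = assms(18)
  define K where "K = rstar / (b - chi * \<mu>)"
  define a where "a = sqrt \<nu>"
  have a: "a > 0" using nu by (simp add: a_def)
  have cm: "chi * \<mu> > 0" using chi mu by simp
  have bm: "b - chi * \<mu> > 0" using bge cm by linarith
  have uC: "u \<in> Cb_unif" and ub0: "\<And>y. 0 \<le> u y \<and> u y \<le> U1plus rstar b chi \<mu> \<theta>1 x1 y"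
    using assms(19) by (auto simp: E1plus_def)
  have cu: "continuous_on UNIV u"
    using uC by (auto simp: Cb_unif_def intro: uniformly_continuous_imp_continuous)
  have ubK: "\<And>y. 0 \<le> u y \<and> u y \<le> K" and ubE: "\<And>y. u y \<le> K * exp (\<theta>1 * (y - x1))"
    using ub0 by (auto simp: U1plus_def K_def min_le_iff_disj)
  have K0: "K \<ge> 0" using ubK[of 0] by linarith
  have rle: "r x \<le> rstar" for x
    unfolding assms(13) by (rule cSUP_upper[OF UNIV_I], rule bounded_imp_bdd_above, rule assms(7))
  have Psi_eq: "Psi \<nu> \<mu> u = (\<lambda>x. \<mu> / (2 * a) * (\<integral>y. exp (- a * \<bar>x - y\<bar>) * u y \<partial>lborel))"
    by (simp add: Psi_def a_def fun_eq_iff)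
  have Pnn: "Psi \<nu> \<mu> u x \<ge> 0" for x
    unfolding Psi_eq using a mu ubK
    by (auto intro!: mult_nonneg_nonneg integral_nonneg_AE)
  have part1: "A_op chi \<nu> \<mu> b c r u (\<lambda>_. K) x \<le> 0" for x
  proof -
    have d0: "deriv (\<lambda>_. K) = (\<lambda>_. 0)" by (rule ext, rule DERIV_imp_deriv, rule DERIV_const)
    have d1: "deriv (\<lambda>_. 0::real) x = 0" by (rule DERIV_imp_deriv, rule DERIV_const)
    have bK: "(b - chi * \<mu>) * K = rstar" using bm by (simp add: K_def)
    have "A_op chi \<nu> \<mu> b c r u (\<lambda>_. K) x = (r x - rstar - chi * \<nu> * Psi \<nu> \<mu> u x) * K"
      by (simp add: A_op_def d0 d1 bK)
    also have "\<dots> \<le> 0"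
    proof (rule mult_nonpos_nonneg[OF _ K0])
      have "chi * \<nu> * Psi \<nu> \<mu> u x \<ge> 0" using chi nu Pnn[of x] by simp
      then show "r x - rstar - chi * \<nu> * Psi \<nu> \<mu> u x \<le> 0" using rle[of x] by linarith
    qed
    finally show ?thesis .
  qed
  have part2: "A_op chi \<nu> \<mu> b c r u (\<lambda>y. K * exp (\<theta>1 * (y - x1))) x \<le> 0" if xl: "x < x1" for x
  proof -
    define U where "U = (\<lambda>y. K * exp (\<theta>1 * (y - x1)))"
    have U0: "U x \<ge> 0" using K0 by (simp add: U_def)
    have dU: "deriv U = (\<lambda>y. \<theta>1 * U y)"
    proof (rule ext, rule DERIV_imp_deriv)
      fix y show "(U has_real_derivative \<theta>1 * U y) (at y)"
        unfolding U_def by (auto intro!: derivative_eq_intros)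
    qed
    have dU2: "deriv (\<lambda>y. \<theta>1 * U y) x = \<theta>1 * (\<theta>1 * U x)"
      by (rule DERIV_imp_deriv) (auto intro!: derivative_eq_intros simp: U_def)
    note pd = psi_deriv[OF a cu ubK, of x]
    define L where "L = (LBINT y:{..<x}. exp (a*y) * u y)"
    define R where "R = (LBINT y=ereal x..\<infinity>. exp (- a*y) * u y)"
    have "(Psi \<nu> \<mu> u has_real_derivative \<mu> / (2 * a) * (a * (exp (a*x) * R - exp (- a*x) * L))) (at x)"
      unfolding Psi_eq L_def R_def pd(3)[symmetric] by (intro DERIV_cmult pd(1))
    then have dP: "deriv (Psi \<nu> \<mu> u) x = \<mu> / 2 * (exp (a*x) * R - exp (- a*x) * L)"
      using a by (simp add: DERIV_imp_deriv)
    have R0: "R \<ge> 0" using pd(2) by (simp add: R_def)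
    have Lb: "exp (- a*x) * L \<le> U x / (a + \<theta>1)"
      unfolding L_def U_def by (rule left_bound[OF a th pd(4) ubE])
    define Q where "Q = deriv (Psi \<nu> \<mu> u) x"
    have Qb: "- Q \<le> \<mu> / 2 * (U x / (a + \<theta>1))"
    proof -
      have "- Q = \<mu> / 2 * (exp (- a*x) * L) - \<mu> / 2 * (exp (a*x) * R)"
        by (simp add: Q_def dP algebra_simps)
      also have "\<dots> \<le> \<mu> / 2 * (exp (- a*x) * L)" using R0 mu by simp
      also have "\<dots> \<le> \<mu> / 2 * (U x / (a + \<theta>1))" using Lb mu by (intro mult_left_mono) auto
      finally show ?thesis .
    qed
    have fr: "\<theta>1 * (U x / (a + \<theta>1)) \<le> U x"
    proof -
      have "\<theta>1 * (U x / (a + \<theta>1)) = U x * (\<theta>1 / (a + \<theta>1))" by simp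
      also have "\<dots> \<le> U x * 1" using a th U0 by (intro mult_left_mono) auto
      finally show ?thesis by simp
    qed
    have q2: "- (chi * \<theta>1 * Q) \<le> chi * \<mu> / 2 * U x"
    proof -
      have "- (chi * \<theta>1 * Q) = chi * \<theta>1 * (- Q)" by simp
      also have "chi * \<theta>1 * (- Q) \<le> chi * \<theta>1 * (\<mu> / 2 * (U x / (a + \<theta>1)))"
        using Qb chi th by (intro mult_left_mono) auto
      also have "\<dots> = chi * \<mu> / 2 * (\<theta>1 * (U x / (a + \<theta>1)))" by simp
      also have "\<dots> \<le> chi * \<mu> / 2 * U x" using fr chi mu by (intro mult_left_mono) auto
      finally show ?thesis .
    qed
    have bU: "chi * \<mu> / 2 * U x \<le> (b - chi * \<mu>) * U x"
      using bge U0 by (intro mult_right_mono) (auto simp: mult.commute)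
    have pnu: "chi * \<nu> * Psi \<nu> \<mu> u x \<ge> 0" using chi nu Pnn[of x] by simp
    define B where "B = \<theta>1 * \<theta>1 + c * \<theta>1 + r x - chi * \<theta>1 * Q - chi * \<nu> * Psi \<nu> \<mu> u x - (b - chi * \<mu>) * U x"
    have rx: "r x \<le> r1" using assms(16) xl by simp
    have thr': "\<theta>1 * \<theta>1 + c * \<theta>1 + r1 = 0" using thr by (simp add: power2_eq_square)
    have B0: "B \<le> 0" unfolding B_def using q2 bU pnu rx thr' by linarith
    have "A_op chi \<nu> \<mu> b c r u U x = U x * B"
      unfolding A_op_def dU dU2 B_def Q_def by algebra
    also have "\<dots> \<le> 0" using U0 B0 by (simp add: mult_nonneg_nonpos)
    finally show ?thesis by (simp add: U_def)
  qed
  show ?thesis using part1 part2 by (simp add: K_def)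
qed

end
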